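(* Let $q\ge 2$ and $n\ge 1$ be integers and let $\boldsymbol{x}\neq\boldsymbol{y}\in\Sigma_q^n$. Then $d_H(\mathcal{R}(\boldsymbol{x}),\mathcal{R}(\boldsymbol{y}))=2$ if and only if there exist sequences $\boldsymbol{u},\boldsymbol{v}\in\Sigma_q^{\ge 0}$, two distinct symbols $a,b\in\Sigma_q$ and an integer $t\ge 1$ such that $$\boldsymbol{x}=(\boldsymbol{u},\boldsymbol{\alpha}_t(ab),\boldsymbol{v}),\qquad \boldsymbol{y}=(\boldsymbol{u},\boldsymbol{\alpha}_t(ba),\boldsymbol{v}).$$
   Context: $\Sigma_q=\{0,1,\dots,q-1\}$; $\Sigma_q^{\ge 0}$ is the set of all finite sequences over $\Sigma_q$, including the empty one; $(\cdot,\cdot)$ denotes concatenation. For $\boldsymbol{x}\in\Sigma_q^n$, $x[i]$ is its $i$-th entry, with the convention $x[i]=0$ for $i\notin[1,n]$; $\boldsymbol{x}[i,j]=(x[i],\dots,x[j])$. The $2$-read vector of $\boldsymbol{x}$ is $\mathcal{R}(\boldsymbol{x})=(c(\boldsymbol{x}[0,1]),c(\boldsymbol{x}[1,2]),\dots,c(\boldsymbol{x}[n,n+1]))$, a vector of length $n+1$ whose $i$-th entry is the multiset $\{\{x[i-1],x[i]\}\}$. $d_H$ denotes Hamming distance (number of positions where entries differ). For distinct $a,b$ and $t\ge 0$, $\boldsymbol{\alpha}_t(ab)$ is the alternating sequence $abab\cdots$ of length $t$, i.e. $(ab)^{t/2}$ if $t$ is even and $(ab)^{(t-1)/2}a$ if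 $t$ is odd. *)

theory Defs
  imports Main "HOL-Library.Multiset"
begin

definition entry :: "nat list \<Rightarrow> nat \<Rightarrow> nat" where
  "entry x i = (if 1 \<le> i \<and> i \<le> length x then x ! (i - 1) else 0)"

definition read2 :: "nat list \<Rightarrow> nat multiset list" where
  "read2 x = map (\<lambda>i. {# entry x (i - 1), entry x i #}) [1..<length x + 2]"

definition hamming :: "'a list \<Rightarrow> 'a list \<Rightarrow> nat" where
  "hamming xs ys = card {i. i < length xs \<and> xs ! i \<noteq> ys ! i}"

definition alt :: "nat \<Rightarrow> 'a \<Rightarrow> 'a \<Rightarrow> 'a list" where
  "alt t a b = map (\<lambda>i. if even i then a else b) [0..<t]"

end

theory Submission
  imports Defs
begin

lemma mset2_eq: "({#a,b#} = {#c,d#}) \<longleftrightarrow> (a=c \<and> b=d) \<or> (a=d \<and> b=c)"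
  by (auto simp: add_eq_conv_ex)

lemma read2_nth: "i \<le> length x \<Longrightarrow> read2 x ! i = {#entry x i, entry x (Suc i)#}"
  by (simp add: read2_def del: upt_Suc)

lemma hamming_read2:
  assumes "length x = length y"
  shows "hamming (read2 x) (read2 y) = card {i. i \<le> length x \<and>
     {#entry x i, entry x (Suc i)#} \<noteq> {#entry y i, entry y (Suc i)#}}"
proof -
  have "{i. i < length (read2 x) \<and> read2 x ! i \<noteq> read2 y ! i} = {i. i \<le> length x \<and>
     {#entry x i, entry x (Suc i)#} \<noteq> {#entry y i, entry y (Suc i)#}}"
    using assms by (auto simp: read2_nth read2_def simp del: upt_Suc)
  then show ?thesis by (simp add: hamming_def)
qed

lemma alt_nth: "i < t \<Longrightarrow> alt t a b ! i = (if even i then a else b)"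
  by (simp add: alt_def)

lemma alt_len[simp]: "length (alt t a b) = t"
  by (simp add: alt_def)

lemma entry_mid: "length u < i \<Longrightarrow> i \<le> length u + length w \<Longrightarrow>
   entry (u @ w @ v) i = w ! (i - length u - 1)"
proof -
  assume a: "length u < i" "i \<le> length u + length w"
  have "(u@w@v) ! (i-1) = (w@v) ! (i - 1 - length u)"
    using a by (intro nth_append_right) simp
  also have "\<dots> = w ! (i - 1 - length u)"
    using a by (intro nth_append_left) simp
  finally show ?thesis using a unfolding entry_def by simp
qed

lemma entry_out: "length w = length w' \<Longrightarrow> i \<le> length u \<or> i > length u + length w \<Longrightarrow>
   entry (u @ w @ v) i = entry (u @ w' @ v) i"
  by (auto simp: entry_def nth_append)

theorem theorem1:
  fixes q n :: nat and x y :: "nat list"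
  assumes "q \<ge> 2" and "n \<ge> 1"
    and "length x = n" and "length y = n"
    and "set x \<subseteq> {0..<q}" and "set y \<subseteq> {0..<q}"
    and "x \<noteq> y"
  shows "hamming (read2 x) (read2 y) = 2 \<longleftrightarrow>
    (\<exists>u v a b t. set u \<subseteq> {0..<q} \<and> set v \<subseteq> {0..<q} \<and>
       a < q \<and> b < q \<and> a \<noteq> b \<and> t \<ge> 1 \<and>
       x = u @ alt t a b @ v \<and> y = u @ alt t b a @ v)"
proof -
  define S where "S = {i. i \<le> length x \<and>
     {#entry x i, entry x (Suc i)#} \<noteq> {#entry y i, entry y (Suc i)#}}"
  have H: "hamming (read2 x) (read2 y) = card S"
    unfolding S_def using assms by (simp add: hamming_read2)
  show ?thesis
  proof
    assume h2: "hamming (read2 x) (read2 y) = 2"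
    define D where "D = {k. 1 \<le> k \<and> k \<le> n \<and> entry x k \<noteq> entry y k}"
    have finD: "finite D" unfolding D_def by auto
    obtain i where i: "i < n" "x ! i \<noteq> y ! i"
      using assms(3,4,7) nth_equalityI by metis
    have "Suc i \<in> D" using i assms(3,4) unfolding D_def entry_def by auto
    hence neD: "D \<noteq> {}" by auto
    define m where "m = Min D"
    define r where "r = Max D"
    have mD: "m \<in> D" and rD: "r \<in> D" using finD neD m_def r_def by auto
    have mr: "m \<le> r" using finD mD r_def by auto
    have m1: "1 \<le> m" and rn: "r \<le> n" using mD rD unfolding D_def by auto
    have below: "entry x k = entry y k" if "k < m" for k
    proof (rule ccontr)
      assume ne: "entry x k \<noteq> entry y k"
      hence "k \<in> D" using assms(3,4) unfolding D_def entry_def by (auto split: if_splits)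
      hence "m \<le> k" using finD m_def by auto
      thus False using that by simp
    qed
    have above: "entry x k = entry y k" if "r < k" for k
    proof (rule ccontr)
      assume ne: "entry x k \<noteq> entry y k"
      hence "k \<in> D" using assms(3,4) unfolding D_def entry_def by (auto split: if_splits)
      hence "k \<le> r" using finD r_def by auto
      thus False using that by simp
    qed
    have xm: "entry x m \<noteq> entry y m" and xr: "entry x r \<noteq> entry y r"
      using mD rD unfolding D_def by auto
    have "m - 1 \<in> S"
      using below[of "m-1"] m1 xm mr rn assms(3) unfolding S_def by (auto simp: mset2_eq)
    moreover have "r \<in> S"
      using above[of "Suc r"] xr rn assms(3) unfolding S_def by (auto simp: mset2_eq)
    moreover have finS: "finite S" unfolding S_def by auto
    moreover have "card S = 2" using h2 H by simp
    moreover have "m - 1 \<noteq> r" using m1 mr by simp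
    ultimately have Seq: "S = {m - 1, r}"
      by (intro card_subset_eq[symmetric]) auto
    have inner: "{#entry x j, entry x (Suc j)#} = {#entry y j, entry y (Suc j)#}"
      if "m \<le> j" "j < r" for j
    proof -
      have "j \<notin> S" using Seq that m1 by auto
      thus ?thesis using that rn assms(3) unfolding S_def by auto
    qed
    define a where "a = entry x m"
    define b where "b = entry y m"
    have ab: "a \<noteq> b" using xm a_def b_def by simp
    have ind: "m + d \<le> r \<longrightarrow> entry x (m+d) = (if even d then a else b) \<and>
                entry y (m+d) = (if even d then b else a)" for d
    proof (induction d)
      case 0
      then show ?case by (simp add: a_def b_def)
    next
      case (Suc d)
      show ?case
      proof
        assume le: "m + Suc d \<le> r"
        hence IH: "entry x (m+d) = (if even d then a else b) \<and>
                entry y (m+d) = (if even d then b else a)" using Suc by simp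
        have "{#entry x (m+d), entry x (Suc (m+d))#} = {#entry y (m+d), entry y (Suc (m+d))#}"
          using inner[of "m+d"] le by simp
        moreover have "entry x (m+d) \<noteq> entry y (m+d)" using IH ab by auto
        ultimately have "entry x (Suc (m+d)) = entry y (m+d) \<and> entry y (Suc (m+d)) = entry x (m+d)"
          by (auto simp: mset2_eq)
        thus "entry x (m + Suc d) = (if even (Suc d) then a else b) \<and>
                entry y (m + Suc d) = (if even (Suc d) then b else a)" using IH by auto
      qed
    qed
    define t where "t = r - m + 1"
    define u where "u = take (m - 1) x"
    define v where "v = drop r x"
    have t1: "t \<ge> 1" unfolding t_def by simp
    have dr: "r = t + (m - 1)" using m1 mr unfolding t_def by simp
    have xsplit: "x = take (m-1) x @ take t (drop (m-1) x) @ drop r x"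
      unfolding dr drop_drop[symmetric] append_take_drop_id by (rule refl)
    have ysplit: "y = take (m-1) y @ take t (drop (m-1) y) @ drop r y"
      unfolding dr drop_drop[symmetric] append_take_drop_id by (rule refl)
    have ty: "take (m-1) y = u"
      unfolding u_def
    proof (rule nth_equalityI)
      show "length (take (m - 1) y) = length (take (m - 1) x)" using assms by simp
      fix k assume "k < length (take (m - 1) y)"
      hence k: "k < m - 1" "k < n" using assms by auto
      have "entry x (Suc k) = entry y (Suc k)" using below[of "Suc k"] k by simp
      thus "take (m - 1) y ! k = take (m - 1) x ! k" using k assms unfolding entry_def by simp
    qed
    have dy: "drop r y = v"
      unfolding v_def
    proof (rule nth_equalityI)
      show "length (drop r y) = length (drop r x)" using assms by simp
      fix k assume "k < length (drop r y)"
      hence k: "r + k < n" using assms by auto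
      have "entry x (Suc (r+k)) = entry y (Suc (r+k))" using above[of "Suc (r+k)"] by simp
      thus "drop r y ! k = drop r x ! k" using k assms rn unfolding entry_def by simp
    qed
    have tx: "take t (drop (m-1) x) = alt t a b"
    proof (rule nth_equalityI)
      show "length (take t (drop (m - 1) x)) = length (alt t a b)"
        using assms m1 mr rn unfolding t_def by simp
      fix k assume "k < length (take t (drop (m - 1) x))"
      hence k: "k < t" "m + k \<le> r" using assms m1 mr rn unfolding t_def by auto
      have "entry x (m+k) = (if even k then a else b)" using ind[of k] k by simp
      moreover have "entry x (m+k) = x ! (m - 1 + k)" using k m1 rn assms unfolding entry_def by simp
      ultimately show "take t (drop (m - 1) x) ! k = alt t a b ! k"
        using k alt_nth[of k t a b] m1 mr rn assms(3,4) unfolding t_def by (simp add: nth_drop)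
    qed
    have tyy: "take t (drop (m-1) y) = alt t b a"
    proof (rule nth_equalityI)
      show "length (take t (drop (m - 1) y)) = length (alt t b a)"
        using assms m1 mr rn unfolding t_def by simp
      fix k assume "k < length (take t (drop (m - 1) y))"
      hence k: "k < t" "m + k \<le> r" using assms m1 mr rn unfolding t_def by auto
      have "entry y (m+k) = (if even k then b else a)" using ind[of k] k by simp
      moreover have "entry y (m+k) = y ! (m - 1 + k)" using k m1 rn assms unfolding entry_def by simp
      ultimately show "take t (drop (m - 1) y) ! k = alt t b a ! k"
        using k alt_nth[of k t b a] m1 mr rn assms(3,4) unfolding t_def by (simp add: nth_drop)
    qed
    have aq: "a < q"
    proof -
      have "a = x ! (m-1)" unfolding a_def entry_def using m1 rn mr assms by simp
      moreover have "m - 1 < length x" using m1 rn mr assms by simp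
      ultimately show ?thesis using assms(5) nth_mem by fastforce
    qed
    have bq: "b < q"
    proof -
      have "b = y ! (m-1)" unfolding b_def entry_def using m1 rn mr assms by simp
      moreover have "m - 1 < length y" using m1 rn mr assms by simp
      ultimately show ?thesis using assms(6) nth_mem by fastforce
    qed
    have "set u \<subseteq> {0..<q}" unfolding u_def using assms(5) set_take_subset by fastforce
    moreover have "set v \<subseteq> {0..<q}" unfolding v_def using assms(5) set_drop_subset by fastforce
    ultimately show "\<exists>u v a b t. set u \<subseteq> {0..<q} \<and> set v \<subseteq> {0..<q} \<and>
       a < q \<and> b < q \<and> a \<noteq> b \<and> t \<ge> 1 \<and>
       x = u @ alt t a b @ v \<and> y = u @ alt t b a @ v"
    proof (intro exI conjI)
      show "x = u @ alt t a b @ v" unfolding u_def v_def tx[symmetric] by (rule xsplit)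
      show "y = u @ alt t b a @ v" unfolding ty[symmetric] dy[symmetric] tyy[symmetric] by (rule ysplit)
    qed (use aq bq ab t1 in auto)
  next
    assume "\<exists>u v a b t. set u \<subseteq> {0..<q} \<and> set v \<subseteq> {0..<q} \<and>
       a < q \<and> b < q \<and> a \<noteq> b \<and> t \<ge> 1 \<and>
       x = u @ alt t a b @ v \<and> y = u @ alt t b a @ v"
    then obtain u v a b t where ab: "a \<noteq> b" and t1: "t \<ge> 1" and
      xe: "x = u @ alt t a b @ v" and ye: "y = u @ alt t b a @ v" by blast
    define p where "p = length u"
    have out: "entry x i = entry y i" if "i \<le> p \<or> i > p + t" for i
      using entry_out[of "alt t a b" "alt t b a" i u v] that xe ye p_def by simp
    have midx: "entry x i = (if even (i - p - 1) then a else b)" if "p < i" "i \<le> p + t" for i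
      using entry_mid[of u i "alt t a b" v] that xe p_def alt_nth[of "i-p-1" t a b] by simp
    have midy: "entry y i = (if even (i - p - 1) then b else a)" if "p < i" "i \<le> p + t" for i
      using entry_mid[of u i "alt t b a" v] that ye p_def alt_nth[of "i-p-1" t b a] by simp
    have lx: "length x = p + t + length v" using xe p_def by simp
    have "S = {p, p + t}"
    proof (rule set_eqI)
      fix i
      show "i \<in> S \<longleftrightarrow> i \<in> {p, p + t}"
      proof (cases "i < p \<or> i > p + t")
        case True
        then show ?thesis unfolding S_def using out[of i] out[of "Suc i"] t1 by auto
      next
        case False
        then consider "i = p" | "p < i \<and> i < p + t" | "i = p + t" by linarith
        then show ?thesis
        proof cases
          case 1
          then show ?thesis unfolding S_def using out[of p] midx[of "Suc p"] midy[of "Suc p"] ab t1 lx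
            by (auto simp: mset2_eq)
        next
          case 2
          have "even (Suc i - p - 1) \<longleftrightarrow> \<not> even (i - p - 1)" using 2 by (simp add: Suc_diff_le)
          then show ?thesis unfolding S_def using 2 midx[of i] midy[of i] midx[of "Suc i"] midy[of "Suc i"] ab lx
            by (auto simp: mset2_eq)
        next
          case 3
          then show ?thesis unfolding S_def using out[of "Suc i"] midx[of i] midy[of i] ab t1 lx
            by (auto simp: mset2_eq)
        qed
      qed
    qed
    thus "hamming (read2 x) (read2 y) = 2" using H t1 by simp
  qed
qed

end
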